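(* Let $V$ be a finite nonempty set and $ij\in P_V$. For every $x\in X_V$, the vector $x'\in\{0,1\}^{P_V}$ defined for all $pq\in P_V$ by $x'_{pq}=1$ if $x_{pi}=x_{jq}=1$, and $x'_{pq}=x_{pq}$ otherwise, satisfies $x'\in X_V$.
   Context: $P_V=\{pq\in V^2\mid p\neq q\}$. $X_V$ is the set of all $x\in\{0,1\}^{P_V}$ such that $x_{pq}+x_{qr}-x_{pr}\le 1$ for all pairwise distinct $p,q,r\in V$. Convention: for $x\in X_V$ and $a\in V$, $x_{aa}:=1$ (so, e.g., $x_{pi}=1$ holds when $p=i$). *)

theory Defs
  imports "HOL-Library.FuncSet"
begin

definition PV :: "'a set \<Rightarrow> ('a \<times> 'a) set" where
  "PV V = {(p, q). p \<in> V \<and> q \<in> V \<and> p \<noteq> q}"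

definition XV :: "'a set \<Rightarrow> (('a \<times> 'a) \<Rightarrow> int) set" where
  "XV V = {x \<in> PV V \<rightarrow>\<^sub>E {0, 1}.
            \<forall>p\<in>V. \<forall>q\<in>V. \<forall>r\<in>V. p \<noteq> q \<and> q \<noteq> r \<and> p \<noteq> r \<longrightarrow>
              x (p, q) + x (q, r) - x (p, r) \<le> 1}"

definition xv :: "(('a \<times> 'a) \<Rightarrow> int) \<Rightarrow> 'a \<Rightarrow> 'a \<Rightarrow> int" where
  "xv x a b = (if a = b then 1 else x (a, b))"

end

theory Submission
  imports Defs
begin

lemma xv_trans:
  assumes x: "x \<in> XV V" and V: "a \<in> V" "b \<in> V" "c \<in> V"
    and ab: "xv x a b = 1" and bc: "xv x b c = 1"
  shows "xv x a c = 1"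
proof (cases "a = c \<or> a = b \<or> b = c")
  case True then show ?thesis using ab bc by (auto simp: xv_def)
next
  case False
  have tri: "x (a, b) + x (b, c) - x (a, c) \<le> 1" using x V False unfolding XV_def by blast
  have "(a, c) \<in> PV V" using V False by (auto simp: PV_def)
  hence "x (a, c) \<in> {0, 1}" using x unfolding XV_def by (auto simp: PiE_def Pi_def)
  then show ?thesis using tri ab bc False by (auto simp: xv_def)
qed

theorem lemma5p4:
  fixes V :: "'a set" and i j :: 'a and x :: "('a \<times> 'a) \<Rightarrow> int"
  assumes "finite V" and "V \<noteq> {}"
    and "(i, j) \<in> PV V"
    and "x \<in> XV V"
  shows "(\<lambda>pq\<in>PV V. if xv x (fst pq) i = 1 \<and> xv x j (snd pq) = 1 then 1 else x pq) \<in> XV V"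
proof -
  let ?y = "(\<lambda>pq\<in>PV V. if xv x (fst pq) i = 1 \<and> xv x j (snd pq) = 1 then 1 else x pq)"
  have ij: "i \<in> V" "j \<in> V" using assms(3) by (auto simp: PV_def)
  have x01: "\<And>pq. pq \<in> PV V \<Longrightarrow> x pq \<in> {0,1}" using assms(4) unfolding XV_def by (auto simp: PiE_def Pi_def)
  have T: "\<And>a b c. a \<in> V \<Longrightarrow> b \<in> V \<Longrightarrow> c \<in> V \<Longrightarrow> xv x a b = 1 \<Longrightarrow> xv x b c = 1 \<Longrightarrow> xv x a c = 1"
    using xv_trans[OF assms(4)] by blast
  have tri: "\<And>p q r. p \<in> V \<Longrightarrow> q \<in> V \<Longrightarrow> r \<in> V \<Longrightarrow> p \<noteq> q \<Longrightarrow> q \<noteq> r \<Longrightarrow> p \<noteq> r \<Longrightarrow>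
      x (p, q) + x (q, r) - x (p, r) \<le> 1" using assms(4) unfolding XV_def by blast
  have "?y \<in> PV V \<rightarrow>\<^sub>E {0, 1}" using x01 by auto
  moreover have "\<forall>p\<in>V. \<forall>q\<in>V. \<forall>r\<in>V. p \<noteq> q \<and> q \<noteq> r \<and> p \<noteq> r \<longrightarrow>
              ?y (p, q) + ?y (q, r) - ?y (p, r) \<le> 1"
  proof (intro ballI impI)
    fix p q r assume V: "p \<in> V" "q \<in> V" "r \<in> V" and d: "p \<noteq> q \<and> q \<noteq> r \<and> p \<noteq> r"
    have P: "(p,q) \<in> PV V" "(q,r) \<in> PV V" "(p,r) \<in> PV V" using V d by (auto simp: PV_def)
    have xpq: "xv x p q = x (p,q)" "xv x q r = x (q,r)" "xv x p r = x (p,r)" using d by (auto simp: xv_def)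
    have t: "x (p, q) + x (q, r) - x (p, r) \<le> 1" using tri V d by blast
    have 01: "x (p,q) \<in> {0,1}" "x (q,r) \<in> {0,1}" "x (p,r) \<in> {0,1}" using x01 P by auto
    show "?y (p, q) + ?y (q, r) - ?y (p, r) \<le> 1"
    proof (cases "xv x p i = 1 \<and> xv x j r = 1")
      case True then show ?thesis using P 01 by auto
    next
      case False
      have A: "\<not> (xv x p i = 1 \<and> xv x j q = 1 \<and> x (q,r) = 1)"
        using False T[of j q r] V ij xpq by auto
      have B: "\<not> (xv x q i = 1 \<and> xv x j r = 1 \<and> x (p,q) = 1)"
        using False T[of p q i] V ij xpq by auto
      have C: "\<not> (xv x p i = 1 \<and> xv x j q = 1 \<and> xv x q i = 1 \<and> xv x j r = 1)"
        using False by auto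
      show ?thesis using P 01 t A B C False by auto
    qed
  qed
  ultimately show ?thesis unfolding XV_def by blast
qed

end
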